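(* Let $s$ be a CorePolyC statement and $\ell\in\{\#t,\#f\}$. There are constants $C,d,k$ (depending only on $s$) such that for every consistent pair $(\Gamma,\Sigma)$ with $\Gamma,\ell\vdash s:\Gamma'$ and $\Sigma\vdash s\Downarrow\Sigma'$ for some $\Gamma',\Sigma'$: (1) if $\ell=\#t$, then $\mathrm{sz}(\Sigma')\mathbin{\dot-}\mathrm{sz}(\Sigma)\le C\,(\mathrm{sz}(\Sigma|_{\mathrm{dom}_I(\Gamma)})^{d}+1)$; (2) if $\ell=\#f$, then $\mathrm{sz}(\Sigma')\mathbin{\dot-}\mathrm{sz}(\Sigma)\le C\,(\mathrm{sz}(\Sigma)^{d^{k}}+1)$.
   Context: CorePolyC. Types are $\mathtt{iint},\mathtt{int},\mathtt{bool}$; $\mathsf{Int}=\{\mathtt{iint},\mathtt{int}\}$, ordered by $\mathtt{iint}\preccurlyeq\mathtt{int}$. Values are unbounded integers ($\mathbb Z$) and booleans $\#t,\#f$. A value $v$ is consistent with a type $t$ if ($v\in\mathbb Z$ and $t\in\mathsf{Int}$) or ($v$ boolean and $t=\mathtt{bool}$). Expressions: variables $x$; constants (nonempty decimal digit strings denoting natural numbers; $\mathtt{true}$, $\mathtt{false}$); operator applications $\mathtt{op}(e_1,\dots,e_m)$; parenthesized $(e)$. Operators and semantics: unary $-$ (negation); binary $+,-,/,\%$ (integer addition, subtraction, division, remainder, with division and remainder by $0$ returning $0$); $\mathtt{size}$, with $\mathtt{size}(v)=\lceil\log_2(\mathrm{abs}(v)+1)\rceil$; comparisons $\texttt{>=},\texttt{<=},\texttt{>},\texttt{<},\texttt{==},\texttt{!=}$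 on integers returning booleans; boolean $\texttt{!},\texttt{\&\&},\texttt{||}$. Statements: declaration $t\ x;$; assignment $x=e;$; block $\{s_1\dots s_m\}$; conditional $\mathbf{if}(e)\ s_1\ \mathbf{else}\ s_2$; loop $\mathbf{for}(x<\mathtt{size}(e))\ s$ (loop bounds are always syntactically of the form $\mathtt{size}(e)$). Semantics (big-step). A store $\Sigma$ is a finite partial map from variables to values; $\Sigma[x\mapsto v]$ is the update. $\Sigma\vdash e\Downarrow v$: a variable $x\in\mathrm{dom}\,\Sigma$ evaluates to $\Sigma(x)$, constants to their value, $\mathtt{op}(e_1,\dots,e_m)$ to $\mathtt{op}$ applied to the values of the $e_i$. $\Sigma\vdash s\Downarrow\Sigma'$: $t\ x;$ gives $\Sigma[x\mapsto 0]$ if $t\in\mathsf{Int}$ and $\Sigma[x\mapsto\#f]$ if $t=\mathtt{bool}$; $x=e;$ (with $x\in\mathrm{dom}\,\Sigma$) gives $\Sigma[x\mapsto v]$ where $\Sigma\vdash e\Downarrow v$; a sequence or block executes its statements in order threading the store (a block returns the final store); a conditional evaluates its guard to a boolean and executes the corresponding branch; $\mathbf{for}(x<e)\ s$ evaluates $e$ once to an integer $i$, sets $\Sigma_0=\Sigma$, executes $s$ from $\Sigma_j[x\mapsto j]$ obtaining $\Sigma_{j+1}$ for $j=0,\dots,i-1$, and ends in $\Sigma_i$ (i.e. in $\Sigma$ if $i\le 0$). Type system. A typing environment $\Gamma$ is a finite partial map from variables to types; $\ell\in\{\#t,\#f\}$ is the loop indicator. Expression typing $\Gamma,\ell\vdash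 e:t$: a variable $x\in\mathrm{dom}\,\Gamma$ has type $\Gamma(x)$; digit literals have type $\mathtt{iint}$, $\mathtt{true},\mathtt{false}$ have type $\mathtt{bool}$; $\texttt{!},\texttt{\&\&},\texttt{||}$ take $\mathtt{bool}$ arguments to $\mathtt{bool}$; comparisons take arguments with types in $\mathsf{Int}$ to $\mathtt{bool}$; $+,-,/,\%$ take arguments with types in $\mathsf{Int}$ to their supremum under $\preccurlyeq$ ($\mathtt{iint}$ iff all arguments are $\mathtt{iint}$); $\mathtt{size}$ takes only an $\mathtt{iint}$ argument, giving $\mathtt{iint}$; parentheses preserve types. Statement typing $\Gamma,\ell\vdash s:\Gamma'$: $t\ x;$ is typable iff $x\notin\mathrm{dom}\,\Gamma$ and not($\ell=\#t$ and $t=\mathtt{iint}$), giving $\Gamma[x\mapsto t]$; $x=e;$ is typable iff $x\in\mathrm{dom}\,\Gamma$, not($\ell=\#t$ and $\Gamma(x)=\mathtt{iint}$), and $\Gamma,\ell\vdash e:t$ with $t,\Gamma(x)$ both in $\mathsf{Int}$ or both $\mathtt{bool}$, giving $\Gamma$; a sequence $s_1\dots s_m$ threads $\Gamma_0=\Gamma$, $\Gamma_{i-1},\ell\vdash s_i:\Gamma_i$, giving $\Gamma_m$; a block $\{\tilde s\}$ is typable if its sequence is, giving $\Gamma$; a conditional needs a guard of type $\mathtt{bool}$ and both branches typable under $\Gamma,\ell$, giving $\Gamma$; $\mathbf{for}(x<e)\ s$ needs $\Gamma,\ell\vdash e:\mathtt{iint}$, $x\notin\mathrm{dom}\,\Gamma$,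 and $\Gamma[x\mapsto\mathtt{iint}],\#t\vdash s:\Gamma'$ for some $\Gamma'$, giving $\Gamma$. A store $\Sigma$ and typing environment $\Gamma$ are consistent (form a consistent pair) if $\mathrm{dom}\,\Gamma\subseteq\mathrm{dom}\,\Sigma$ and $\Sigma(x)$ is consistent with $\Gamma(x)$ for all $x\in\mathrm{dom}\,\Gamma$. $\mathrm{dom}_I(\Gamma)=\{x\in\mathrm{dom}\,\Gamma:\Gamma(x)=\mathtt{iint}\}$ and $\Sigma|_D$ is the restriction of $\Sigma$ to $D$. Sizes: $\mathrm{sz}(v)=\lceil\log_2(\mathrm{abs}(v)+1)\rceil$ for $v\in\mathbb Z$, $\mathrm{sz}(\#t)=\mathrm{sz}(\#f)=1$, $\mathrm{sz}(\Sigma)=\max_{x\in\mathrm{dom}\,\Sigma}\mathrm{sz}(\Sigma(x))$ ($0$ if empty). $a\mathbin{\dot-}b=\max(a-b,0)$. *)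

theory Defs
  imports Complex_Main
begin

type_synonym vname = string

datatype ty = IInt | TInt | TBool

definition is_int_ty :: "ty \<Rightarrow> bool" where
  "is_int_ty t \<longleftrightarrow> t = IInt \<or> t = TInt"

datatype val = VInt int | VBool bool

datatype op = Neg | Plus | Minus | Div | Mod | Size
  | Ge | Le | Gt | Lt | Eq | Neq | Not | And | Or

datatype expr =
    Var vname
  | Num nat
  | TrueC
  | FalseC
  | App op "expr list"
  | Paren expr

text \<open>For x e s represents for(x < size(e)) s: the loop bound is always size(e).\<close>
datatype stmt =
    Decl ty vname
  | Assign vname expr
  | Block "stmt list"
  | If expr stmt stmt
  | For vname expr stmt

definition size_int :: "int \<Rightarrow> nat" where
  "size_int v = nat \<lceil>log 2 (real_of_int \<bar>v\<bar> + 1)\<rceil>"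

fun sz_val :: "val \<Rightarrow> nat" where
  "sz_val (VInt v) = size_int v"
| "sz_val (VBool b) = 1"

type_synonym store = "vname \<Rightarrow> val option"
type_synonym tenv = "vname \<Rightarrow> ty option"

text \<open>Maximum size of a stored value, 0 for the empty store (stores are finite).\<close>
definition sz_store :: "store \<Rightarrow> nat" where
  "sz_store \<Sigma> = Max (insert 0 (sz_val ` ran \<Sigma>))"

definition domI :: "tenv \<Rightarrow> vname set" where
  "domI \<Gamma> = {x. \<Gamma> x = Some IInt}"

fun int_args :: "val list \<Rightarrow> int list option" where
  "int_args [] = Some []"
| "int_args (VInt a # vs) = map_option (Cons a) (int_args vs)"
| "int_args (VBool b # vs) = None"

fun bool_args :: "val list \<Rightarrow> bool list option" where
  "bool_args [] = Some []"
| "bool_args (VBool a # vs) = map_option (Cons a) (bool_args vs)"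
| "bool_args (VInt b # vs) = None"

definition apply_op :: "op \<Rightarrow> val list \<Rightarrow> val option" where
  "apply_op f vs =
    (case f of
       Neg \<Rightarrow> (case int_args vs of Some [a] \<Rightarrow> Some (VInt (- a)) | _ \<Rightarrow> None)
     | Size \<Rightarrow> (case int_args vs of Some [a] \<Rightarrow> Some (VInt (int (size_int a))) | _ \<Rightarrow> None)
     | Not \<Rightarrow> (case bool_args vs of Some [a] \<Rightarrow> Some (VBool (\<not> a)) | _ \<Rightarrow> None)
     | And \<Rightarrow> (case bool_args vs of Some [a, b] \<Rightarrow> Some (VBool (a \<and> b)) | _ \<Rightarrow> None)
     | Or \<Rightarrow> (case bool_args vs of Some [a, b] \<Rightarrow> Some (VBool (a \<or> b)) | _ \<Rightarrow> None)
     | _ \<Rightarrow> (case int_args vs of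
              Some [a, b] \<Rightarrow> Some (case f of
                  Plus \<Rightarrow> VInt (a + b)
                | Minus \<Rightarrow> VInt (a - b)
                | Div \<Rightarrow> VInt (if b = 0 then 0 else a div b)
                | Mod \<Rightarrow> VInt (if b = 0 then 0 else a mod b)
                | Ge \<Rightarrow> VBool (a \<ge> b)
                | Le \<Rightarrow> VBool (a \<le> b)
                | Gt \<Rightarrow> VBool (a > b)
                | Lt \<Rightarrow> VBool (a < b)
                | Eq \<Rightarrow> VBool (a = b)
                | _ \<Rightarrow> VBool (a \<noteq> b))
            | _ \<Rightarrow> None))"

inductive eval :: "store \<Rightarrow> expr \<Rightarrow> val \<Rightarrow> bool" where
  eval_Var: "\<Sigma> x = Some v \<Longrightarrow> eval \<Sigma> (Var x) v"
| eval_Num: "eval \<Sigma> (Num n) (VInt (int n))"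
| eval_True: "eval \<Sigma> TrueC (VBool True)"
| eval_False: "eval \<Sigma> FalseC (VBool False)"
| eval_App: "list_all2 (eval \<Sigma>) es vs \<Longrightarrow> apply_op f vs = Some v \<Longrightarrow> eval \<Sigma> (App f es) v"
| eval_Paren: "eval \<Sigma> e v \<Longrightarrow> eval \<Sigma> (Paren e) v"

inductive exec :: "store \<Rightarrow> stmt \<Rightarrow> store \<Rightarrow> bool"
  and exec_seq :: "store \<Rightarrow> stmt list \<Rightarrow> store \<Rightarrow> bool"
  and exec_loop :: "vname \<Rightarrow> stmt \<Rightarrow> int \<Rightarrow> int \<Rightarrow> store \<Rightarrow> store \<Rightarrow> bool"
where
  exec_DeclI: "is_int_ty t \<Longrightarrow> exec \<Sigma> (Decl t x) (\<Sigma>(x \<mapsto> VInt 0))"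
| exec_DeclB: "exec \<Sigma> (Decl TBool x) (\<Sigma>(x \<mapsto> VBool False))"
| exec_Assign: "x \<in> dom \<Sigma> \<Longrightarrow> eval \<Sigma> e v \<Longrightarrow> exec \<Sigma> (Assign x e) (\<Sigma>(x \<mapsto> v))"
| exec_Block: "exec_seq \<Sigma> ss \<Sigma>' \<Longrightarrow> exec \<Sigma> (Block ss) \<Sigma>'"
| exec_IfT: "eval \<Sigma> b (VBool True) \<Longrightarrow> exec \<Sigma> s1 \<Sigma>' \<Longrightarrow> exec \<Sigma> (If b s1 s2) \<Sigma>'"
| exec_IfF: "eval \<Sigma> b (VBool False) \<Longrightarrow> exec \<Sigma> s2 \<Sigma>' \<Longrightarrow> exec \<Sigma> (If b s1 s2) \<Sigma>'"
| exec_For: "eval \<Sigma> (App Size [e]) (VInt i) \<Longrightarrow> exec_loop x s i 0 \<Sigma> \<Sigma>'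
             \<Longrightarrow> exec \<Sigma> (For x e s) \<Sigma>'"
| exec_seq_Nil: "exec_seq \<Sigma> [] \<Sigma>"
| exec_seq_Cons: "exec \<Sigma> s \<Sigma>1 \<Longrightarrow> exec_seq \<Sigma>1 ss \<Sigma>' \<Longrightarrow> exec_seq \<Sigma> (s # ss) \<Sigma>'"
| exec_loop_done: "i \<le> j \<Longrightarrow> exec_loop x s i j \<Sigma> \<Sigma>"
| exec_loop_step: "j < i \<Longrightarrow> exec (\<Sigma>(x \<mapsto> VInt j)) s \<Sigma>1 \<Longrightarrow> exec_loop x s i (j + 1) \<Sigma>1 \<Sigma>'
             \<Longrightarrow> exec_loop x s i j \<Sigma> \<Sigma>'"

definition sup_int :: "ty list \<Rightarrow> ty" where
  "sup_int ts = (if (\<forall>t\<in>set ts. t = IInt) then IInt else TInt)"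

definition op_type :: "op \<Rightarrow> ty list \<Rightarrow> ty option" where
  "op_type f ts =
    (case f of
       Not \<Rightarrow> (if ts = [TBool] then Some TBool else None)
     | And \<Rightarrow> (if ts = [TBool, TBool] then Some TBool else None)
     | Or \<Rightarrow> (if ts = [TBool, TBool] then Some TBool else None)
     | Size \<Rightarrow> (if ts = [IInt] then Some IInt else None)
     | Neg \<Rightarrow> (if length ts = 1 \<and> (\<forall>t\<in>set ts. is_int_ty t) then Some (sup_int ts) else None)
     | _ \<Rightarrow>
        (if f \<in> {Plus, Minus, Div, Mod} then
           (if length ts = 2 \<and> (\<forall>t\<in>set ts. is_int_ty t) then Some (sup_int ts) else None)
         else
           (if length ts = 2 \<and> (\<forall>t\<in>set ts. is_int_ty t) then Some TBool else None)))"

inductive etype :: "tenv \<Rightarrow> bool \<Rightarrow> expr \<Rightarrow> ty \<Rightarrow> bool" where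
  ety_Var: "\<Gamma> x = Some t \<Longrightarrow> etype \<Gamma> l (Var x) t"
| ety_Num: "etype \<Gamma> l (Num n) IInt"
| ety_True: "etype \<Gamma> l TrueC TBool"
| ety_False: "etype \<Gamma> l FalseC TBool"
| ety_App: "list_all2 (etype \<Gamma> l) es ts \<Longrightarrow> op_type f ts = Some t \<Longrightarrow> etype \<Gamma> l (App f es) t"
| ety_Paren: "etype \<Gamma> l e t \<Longrightarrow> etype \<Gamma> l (Paren e) t"

definition compat_ty :: "ty \<Rightarrow> ty \<Rightarrow> bool" where
  "compat_ty t t' \<longleftrightarrow> (is_int_ty t \<and> is_int_ty t') \<or> (t = TBool \<and> t' = TBool)"

inductive stype :: "tenv \<Rightarrow> bool \<Rightarrow> stmt \<Rightarrow> tenv \<Rightarrow> bool"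
  and stype_seq :: "tenv \<Rightarrow> bool \<Rightarrow> stmt list \<Rightarrow> tenv \<Rightarrow> bool"
where
  sty_Decl: "x \<notin> dom \<Gamma> \<Longrightarrow> \<not> (l \<and> t = IInt) \<Longrightarrow> stype \<Gamma> l (Decl t x) (\<Gamma>(x \<mapsto> t))"
| sty_Assign: "\<Gamma> x = Some tx \<Longrightarrow> \<not> (l \<and> tx = IInt) \<Longrightarrow> etype \<Gamma> l e t \<Longrightarrow> compat_ty t tx
               \<Longrightarrow> stype \<Gamma> l (Assign x e) \<Gamma>"
| sty_Block: "stype_seq \<Gamma> l ss \<Gamma>' \<Longrightarrow> stype \<Gamma> l (Block ss) \<Gamma>"
| sty_If: "etype \<Gamma> l b TBool \<Longrightarrow> stype \<Gamma> l s1 \<Gamma>1 \<Longrightarrow> stype \<Gamma> l s2 \<Gamma>2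
           \<Longrightarrow> stype \<Gamma> l (If b s1 s2) \<Gamma>"
| sty_For: "etype \<Gamma> l (App Size [e]) IInt \<Longrightarrow> x \<notin> dom \<Gamma> \<Longrightarrow> stype (\<Gamma>(x \<mapsto> IInt)) True s \<Gamma>'
            \<Longrightarrow> stype \<Gamma> l (For x e s) \<Gamma>"
| sty_seq_Nil: "stype_seq \<Gamma> l [] \<Gamma>"
| sty_seq_Cons: "stype \<Gamma> l s \<Gamma>1 \<Longrightarrow> stype_seq \<Gamma>1 l ss \<Gamma>' \<Longrightarrow> stype_seq \<Gamma> l (s # ss) \<Gamma>'"

fun val_consistent :: "val \<Rightarrow> ty \<Rightarrow> bool" where
  "val_consistent (VInt v) t = is_int_ty t"
| "val_consistent (VBool b) t = (t = TBool)"

definition consistent :: "tenv \<Rightarrow> store \<Rightarrow> bool" where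
  "consistent \<Gamma> \<Sigma> \<longleftrightarrow> dom \<Gamma> \<subseteq> dom \<Sigma> \<and>
     (\<forall>x t v. \<Gamma> x = Some t \<longrightarrow> \<Sigma> x = Some v \<longrightarrow> val_consistent v t)"

end

theory Submission
  imports Defs
begin

lemma size_int_le_iff: "size_int v \<le> n \<longleftrightarrow> \<bar>v\<bar> < 2 ^ n"
proof -
  have pos: "(0::real) < real_of_int \<bar>v\<bar> + 1" by simp
  have "size_int v \<le> n \<longleftrightarrow> log 2 (real_of_int \<bar>v\<bar> + 1) \<le> real n"
    unfolding size_int_def by (simp add: ceiling_le_iff nat_le_iff)
  also have "\<dots> \<longleftrightarrow> log 2 (real_of_int \<bar>v\<bar> + 1) \<le> log 2 (2 ^ n)" by simp
  also have "\<dots> \<longleftrightarrow> real_of_int \<bar>v\<bar> + 1 \<le> 2 ^ n" using pos by (subst log_le_cancel_iff) auto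
  also have "\<dots> \<longleftrightarrow> \<bar>v\<bar> + 1 \<le> 2 ^ n"
    by (metis of_int_1 of_int_add of_int_le_iff of_int_numeral of_int_power)
  finally show ?thesis by linarith
qed

lemma size_int_lt: "\<bar>v\<bar> < 2 ^ size_int v"
  using size_int_le_iff by blast

lemma size_int_mono: "\<bar>a\<bar> \<le> \<bar>b\<bar> \<Longrightarrow> size_int a \<le> size_int b"
  using size_int_lt[of b] by (simp add: size_int_le_iff)

lemma size_int_neg[simp]: "size_int (- a) = size_int a"
  by (simp add: size_int_def)

lemma size_int_add: "size_int (a + b) \<le> max (size_int a) (size_int b) + 1"
proof -
  let ?m = "max (size_int a) (size_int b)"
  have "\<bar>a\<bar> < 2 ^ ?m" using size_int_lt[of a]
    by (meson max.cobounded1 one_le_numeral order_less_le_trans power_increasing)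
  moreover have "\<bar>b\<bar> < 2 ^ ?m" using size_int_lt[of b]
    by (meson max.cobounded2 one_le_numeral order_less_le_trans power_increasing)
  ultimately have "\<bar>a + b\<bar> < 2 ^ (?m + 1)" by simp
  thus ?thesis by (simp add: size_int_le_iff)
qed

lemma size_int_sub: "size_int (a - b) \<le> max (size_int a) (size_int b) + 1"
  using size_int_add[of a "-b"] by simp

lemma abs_div_pos: "(b::int) > 0 \<Longrightarrow> \<bar>a div b\<bar> \<le> \<bar>a\<bar>"
  by (smt (verit, del_insts) div_by_1 pos_imp_zdiv_neg_iff zdiv_mono2 zdiv_mono2_neg)
lemma abs_div_neg: "(b::int) < 0 \<Longrightarrow> \<bar>a div b\<bar> \<le> \<bar>a\<bar>"
  by (smt (verit, best) div_minus_minus div_nonneg_neg_le0 int_div_le_self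
    int_div_less_self neg_mod_bound neg_mod_sign zdiv_zminus2_eq_if)

lemma size_int_div: "size_int (a div b) \<le> size_int a"
  apply (rule size_int_mono)
  using abs_div_pos[of b a] abs_div_neg[of b a] by (cases b "0::int" rule: linorder_cases) auto

lemma size_int_mod: "b \<noteq> 0 \<Longrightarrow> size_int (a mod b) \<le> size_int b"
  apply (rule size_int_mono)
  using abs_mod_less[of b a] by simp

lemma size_int_nat: "size_int (int n) \<le> n"
  by (simp add: size_int_le_iff)

lemma int_args_map: "int_args vs = Some as \<Longrightarrow> vs = map VInt as"
  by (induction vs arbitrary: as rule: int_args.induct) auto

lemma size_int_add_le: "size_int a \<le> B \<Longrightarrow> size_int b \<le> B \<Longrightarrow> size_int (a + b) \<le> Suc B"
  using size_int_add[of a b] by simp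
lemma size_int_sub_le: "size_int a \<le> B \<Longrightarrow> size_int b \<le> B \<Longrightarrow> size_int (a - b) \<le> Suc B"
  using size_int_sub[of a b] by simp
lemma size_int_div_le: "size_int a \<le> B \<Longrightarrow> size_int (a div b) \<le> Suc B"
  using size_int_div[of a b] by simp
lemma size_int_mod_le: "b \<noteq> 0 \<Longrightarrow> size_int b \<le> B \<Longrightarrow> size_int (a mod b) \<le> Suc B"
  using size_int_mod[of b a] by simp
lemma size_int_size_le: "size_int a \<le> B \<Longrightarrow> size_int (int (size_int a)) \<le> Suc B"
  using size_int_nat[of "size_int a"] by simp
lemma size_int_0[simp]: "size_int 0 = 0"
  by (simp add: size_int_def)

lemma apply_op_bound:
  assumes "apply_op f vs = Some v" "\<forall>w\<in>set vs. sz_val w \<le> B"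
  shows "sz_val v \<le> B + 1"
proof -
  have I: "\<forall>as. int_args vs = Some as \<longrightarrow> (\<forall>a\<in>set as. size_int a \<le> B)"
    using assms(2) int_args_map by fastforce
  show ?thesis
    using assms(1) I
    by (cases f) (auto simp: apply_op_def size_int_add_le size_int_sub_le size_int_div_le
         size_int_mod_le size_int_size_le le_SucI split: option.splits list.splits)
qed

lemma la2_set2: "list_all2 P xs ys \<Longrightarrow> y \<in> set ys \<Longrightarrow> \<exists>x\<in>set xs. P x y"
  by (induction xs ys rule: list_all2_induct) auto
lemma la2_set1: "list_all2 P xs ys \<Longrightarrow> x \<in> set xs \<Longrightarrow> \<exists>y\<in>set ys. P x y"
  by (induction xs ys rule: list_all2_induct) auto

fun vars :: "expr \<Rightarrow> vname set" where
  "vars (Var x) = {x}"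
| "vars (App f es) = (\<Union>e\<in>set es. vars e)"
| "vars (Paren e) = vars e"
| "vars (Num n) = {}"
| "vars TrueC = {}"
| "vars FalseC = {}"

fun esz :: "expr \<Rightarrow> nat" where
  "esz (Num n) = size_int (int n) + 1"
| "esz (App f es) = sum_list (map esz es) + 1"
| "esz (Paren e) = esz e"
| "esz (Var x) = 1"
| "esz TrueC = 1"
| "esz FalseC = 1"

lemma eval_bound:
  "eval \<Sigma> e v \<Longrightarrow> (\<And>y w. y \<in> vars e \<Longrightarrow> \<Sigma> y = Some w \<Longrightarrow> sz_val w \<le> M) \<Longrightarrow> sz_val v \<le> M + esz e"
proof (induction rule: eval.induct)
  case (eval_Var \<Sigma> x v)
  then show ?case by fastforce
next
  case (eval_Num \<Sigma> n)
  then show ?case by simp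
next
  case (eval_True \<Sigma>)
  then show ?case by simp
next
  case (eval_False \<Sigma>)
  then show ?case by simp
next
  case (eval_App \<Sigma> es vs f v)
  have "\<forall>w\<in>set vs. sz_val w \<le> M + sum_list (map esz es)"
  proof
    fix w assume "w \<in> set vs"
    then obtain e where e: "e \<in> set es" "eval \<Sigma> e w"
      "(\<And>y w. y \<in> vars e \<Longrightarrow> \<Sigma> y = Some w \<Longrightarrow> sz_val w \<le> M) \<Longrightarrow> sz_val w \<le> M + esz e"
      using la2_set2[OF eval_App.IH] by blast
    have "sz_val w \<le> M + esz e" using e(1) e(3) eval_App.prems by auto
    also have "esz e \<le> sum_list (map esz es)" using e(1) by (simp add: member_le_sum_list)
    finally show "sz_val w \<le> M + sum_list (map esz es)" by simp
  qed
  from apply_op_bound[OF eval_App.hyps this] show ?case by simp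
next
  case (eval_Paren \<Sigma> e v)
  then show ?case by simp
qed

lemma op_type_IInt: "op_type f ts = Some IInt \<Longrightarrow> t \<in> set ts \<Longrightarrow> t = IInt"
  by (cases f) (auto simp: op_type_def sup_int_def split: if_splits)

lemma etype_IInt_vars: "etype \<Gamma> l e t \<Longrightarrow> t = IInt \<Longrightarrow> y \<in> vars e \<Longrightarrow> \<Gamma> y = Some IInt"
proof (induction rule: etype.induct)
  case (ety_App \<Gamma> l es ts f t)
  then obtain e where e: "e \<in> set es" "y \<in> vars e" by auto
  then obtain t' where "t' \<in> set ts" "etype \<Gamma> l e t' \<and> (t' = IInt \<longrightarrow> y \<in> vars e \<longrightarrow> \<Gamma> y = Some IInt)"
    using la2_set1[OF ety_App.IH e(1)] by blast
  then show ?case using op_type_IInt ety_App e by blast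
qed auto

inductive_cases sDeclE: "stype \<Gamma> l (Decl t x) \<Gamma>'"
inductive_cases sAssignE: "stype \<Gamma> l (Assign x e) \<Gamma>'"
inductive_cases sBlockE: "stype \<Gamma> l (Block ss) \<Gamma>'"
inductive_cases sIfE: "stype \<Gamma> l (If b s1 s2) \<Gamma>'"
inductive_cases sForE: "stype \<Gamma> l (For x e s) \<Gamma>'"
inductive_cases sNilE: "stype_seq \<Gamma> l [] \<Gamma>'"
inductive_cases sConsE: "stype_seq \<Gamma> l (s # ss) \<Gamma>'"
inductive_cases xDeclE: "exec \<Sigma> (Decl t x) \<Sigma>'"
inductive_cases xAssignE: "exec \<Sigma> (Assign x e) \<Sigma>'"
inductive_cases xBlockE: "exec \<Sigma> (Block ss) \<Sigma>'"
inductive_cases xIfE: "exec \<Sigma> (If b s1 s2) \<Sigma>'"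
inductive_cases xForE: "exec \<Sigma> (For x e s) \<Sigma>'"
inductive_cases xNilE: "exec_seq \<Sigma> [] \<Sigma>'"
inductive_cases xConsE: "exec_seq \<Sigma> (s # ss) \<Sigma>'"
inductive_cases xLoopE: "exec_loop x s i j \<Sigma> \<Sigma>'"
inductive_cases evAppE: "eval \<Sigma> (App f es) v"

lemma stype_mono:
  "stype \<Gamma> l s \<Gamma>' \<Longrightarrow> \<Gamma> \<subseteq>\<^sub>m \<Gamma>'"
  "stype_seq \<Gamma> l ss \<Gamma>' \<Longrightarrow> \<Gamma> \<subseteq>\<^sub>m \<Gamma>'"
  by (induction rule: stype_stype_seq.inducts) (auto simp: map_le_def dom_def intro: map_le_trans)

lemma stype_domI:
  "stype \<Gamma> l s \<Gamma>' \<Longrightarrow> l \<longrightarrow> domI \<Gamma>' = domI \<Gamma>"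
  "stype_seq \<Gamma> l ss \<Gamma>' \<Longrightarrow> l \<longrightarrow> domI \<Gamma>' = domI \<Gamma>"
  by (induction rule: stype_stype_seq.inducts) (auto simp: domI_def)

lemma fin_upd1[simp]: "finite (dom \<Sigma>) \<Longrightarrow> finite (dom (\<lambda>a. if a = x then Some v else \<Sigma> a))"
  by (rule finite_subset[of _ "insert x (dom \<Sigma>)"]) auto

lemma exec_finite:
  "exec \<Sigma> s \<Sigma>' \<Longrightarrow> finite (dom \<Sigma>) \<longrightarrow> finite (dom \<Sigma>')"
  "exec_seq \<Sigma> ss \<Sigma>' \<Longrightarrow> finite (dom \<Sigma>) \<longrightarrow> finite (dom \<Sigma>')"
  "exec_loop x s i j \<Sigma> \<Sigma>' \<Longrightarrow> finite (dom \<Sigma>) \<longrightarrow> finite (dom \<Sigma>')"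
  by (induction rule: exec_exec_seq_exec_loop.inducts) auto

lemma frame:
  "exec \<Sigma> s \<Sigma>' \<Longrightarrow> \<forall>\<Gamma> \<Gamma>'. stype \<Gamma> True s \<Gamma>' \<longrightarrow> (\<forall>y. \<Gamma> y = Some IInt \<longrightarrow> \<Sigma>' y = \<Sigma> y)"
  "exec_seq \<Sigma> ss \<Sigma>' \<Longrightarrow> \<forall>\<Gamma> \<Gamma>'. stype_seq \<Gamma> True ss \<Gamma>' \<longrightarrow> (\<forall>y. \<Gamma> y = Some IInt \<longrightarrow> \<Sigma>' y = \<Sigma> y)"
  "exec_loop x s i j \<Sigma> \<Sigma>' \<Longrightarrow> \<forall>\<Gamma> \<Gamma>'. stype (\<Gamma>(x \<mapsto> IInt)) True s \<Gamma>' \<longrightarrow> x \<notin> dom \<Gamma> \<longrightarrow>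
      (\<forall>y. \<Gamma> y = Some IInt \<longrightarrow> \<Sigma>' y = \<Sigma> y)"
proof (induction rule: exec_exec_seq_exec_loop.inducts)
  case (exec_DeclI t \<Sigma> x)
  then show ?case by (auto elim!: sDeclE)
next
  case (exec_DeclB \<Sigma> x)
  then show ?case by (auto elim!: sDeclE)
next
  case (exec_Assign x \<Sigma> e v)
  then show ?case by (auto elim!: sAssignE)
next
  case (exec_Block \<Sigma> ss \<Sigma>')
  then show ?case by (auto elim!: sBlockE)
next
  case (exec_IfT \<Sigma> b s1 \<Sigma>' s2)
  then show ?case by (auto elim!: sIfE)
next
  case (exec_IfF \<Sigma> b s2 \<Sigma>' s1)
  then show ?case by (auto elim!: sIfE)
next
  case (exec_For \<Sigma> e i x s \<Sigma>')
  show ?case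
  proof (intro allI impI)
    fix \<Gamma> \<Gamma>' y assume a: "stype \<Gamma> True (For x e s) \<Gamma>'" "\<Gamma> y = Some IInt"
    from a(1) obtain \<Gamma>0 where "stype (\<Gamma>(x \<mapsto> IInt)) True s \<Gamma>0" "x \<notin> dom \<Gamma>"
      using sForE[OF a(1)] by blast
    then show "\<Sigma>' y = \<Sigma> y" using exec_For.IH a(2) by blast
  qed
next
  case (exec_seq_Nil \<Sigma>)
  then show ?case by auto
next
  case (exec_seq_Cons \<Sigma> s \<Sigma>1 ss \<Sigma>')
  show ?case
  proof (intro allI impI)
    fix \<Gamma> \<Gamma>' y assume "stype_seq \<Gamma> True (s # ss) \<Gamma>'" "\<Gamma> y = Some IInt"
    then obtain \<Gamma>1 where "stype \<Gamma> True s \<Gamma>1" "stype_seq \<Gamma>1 True ss \<Gamma>'" by (auto elim!: sConsE)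
    moreover have "\<Gamma>1 y = Some IInt" using stype_mono(1)[OF calculation(1)] \<open>\<Gamma> y = Some IInt\<close>
      by (metis domI map_le_def)
    ultimately show "\<Sigma>' y = \<Sigma> y" using exec_seq_Cons.IH \<open>\<Gamma> y = Some IInt\<close> by metis
  qed
next
  case (exec_loop_done i j x s \<Sigma>)
  then show ?case by auto
next
  case (exec_loop_step j i \<Sigma> x s \<Sigma>1 \<Sigma>')
  show ?case
  proof (intro allI impI)
    fix \<Gamma> \<Gamma>' y assume a: "stype (\<Gamma>(x \<mapsto> IInt)) True s \<Gamma>'" "x \<notin> dom \<Gamma>" "\<Gamma> y = Some IInt"
    then have "y \<noteq> x" by auto
    have "\<Sigma>1 y = (\<Sigma>(x \<mapsto> VInt j)) y" using exec_loop_step.IH(1) a \<open>y \<noteq> x\<close> by auto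
    moreover have "\<Sigma>' y = \<Sigma>1 y" using exec_loop_step.IH(2) a by blast
    ultimately show "\<Sigma>' y = \<Sigma> y" using \<open>y \<noteq> x\<close> by simp
  qed
qed

lemma sz_store_ge: "finite (dom \<Sigma>) \<Longrightarrow> \<Sigma> x = Some w \<Longrightarrow> sz_val w \<le> sz_store \<Sigma>"
  unfolding sz_store_def by (intro Max_ge) (auto simp: finite_ran ranI)

lemma sz_store_le: "finite (dom \<Sigma>) \<Longrightarrow> (\<And>x w. \<Sigma> x = Some w \<Longrightarrow> sz_val w \<le> B) \<Longrightarrow> sz_store \<Sigma> \<le> B"
  unfolding sz_store_def apply (subst Max_le_iff)
    apply (simp add: finite_ran)
   apply simp
  apply (auto simp: ran_def)
  done

lemma sz_store_upd: "finite (dom \<Sigma>) \<Longrightarrow> sz_store (\<Sigma>(x \<mapsto> v)) \<le> max (sz_store \<Sigma>) (sz_val v)"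
  apply (rule sz_store_le)
   apply simp
  by (auto dest: sz_store_ge split: if_splits)

lemma sz_store_restrict: "finite (dom \<Sigma>) \<Longrightarrow> sz_store (\<Sigma> |` D) \<le> sz_store \<Sigma>"
  apply (rule sz_store_le)
   apply simp
  by (auto dest: sz_store_ge split: if_splits simp: restrict_map_def)


inductive_cases etAppE: "etype \<Gamma> l (App f es) t"

definition mI :: "tenv \<Rightarrow> store \<Rightarrow> nat" where
  "mI \<Gamma> \<Sigma> = sz_store (\<Sigma> |` domI \<Gamma>)"

lemma mI_ge: "finite (dom \<Sigma>) \<Longrightarrow> \<Gamma> y = Some IInt \<Longrightarrow> \<Sigma> y = Some w \<Longrightarrow> sz_val w \<le> mI \<Gamma> \<Sigma>"
  unfolding mI_def by (rule sz_store_ge[of _ y]) (auto simp: domI_def)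

lemma mI_le_sz: "finite (dom \<Sigma>) \<Longrightarrow> mI \<Gamma> \<Sigma> \<le> sz_store \<Sigma>"
  unfolding mI_def by (rule sz_store_restrict)

lemma arith1: "(K::nat) * (K + C0 * (K+1)^d0) \<le> (1 + C0) * (K+1)^(d0+2)"
proof -
  have a0: "K+1 \<le> (K+1)^(d0+1)" by (rule self_le_power) auto
  then have a: "K \<le> (K+1)^(d0+1)" by linarith
  have b: "(K+1)^d0 \<le> (K+1)^(d0+1)" by (rule power_increasing) auto
  have "K + C0 * (K+1)^d0 \<le> (K+1)^(d0+1) + C0 * (K+1)^(d0+1)"
    using a b by (simp add: add_mono)
  also have "\<dots> = (1 + C0) * (K+1)^(d0+1)" by (simp add: algebra_simps)
  finally have c: "K + C0 * (K+1)^d0 \<le> (1 + C0) * (K+1)^(d0+1)" .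
  have "K * (K + C0 * (K+1)^d0) \<le> (K+1) * ((1 + C0) * (K+1)^(d0+1))"
    using c by (intro mult_mono) auto
  also have "\<dots> = (1 + C0) * (K+1)^(d0+2)" by (simp add: algebra_simps)
  finally show ?thesis .
qed

lemma arith2: "((m::nat) + E + 1)^D \<le> (E+1)^D * (m+1)^D"
proof -
  have "m + E + 1 \<le> (E+1)*(m+1)" by (simp add: algebra_simps)
  then have "(m + E + 1)^D \<le> ((E+1)*(m+1))^D" by (rule power_mono) simp
  also have "((E+1)*(m+1))^D = (E+1)^D * (m+1)^D" by (rule power_mult_distrib)
  finally show ?thesis .
qed

lemma arith3: "(C1::nat) * (m+1)^d1 \<le> (C1+C2)*(m+1)^(max d1 d2)"
  by (intro mult_mono power_increasing) auto

lemma arith3': "(C2::nat) * (m+1)^d2 \<le> (C1+C2)*(m+1)^(max d1 d2)"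
  by (intro mult_mono power_increasing) auto

lemma arith4: "(x::nat) \<le> P*(n+1)^p \<Longrightarrow> Q*(x+1)^q \<le> Q*(P+1)^q*(n+1)^(p*q)"
proof -
  assume x: "x \<le> P*(n+1)^p"
  have "1 \<le> (n+1)^p" by simp
  moreover have "(P+1)*(n+1)^p = P*(n+1)^p + (n+1)^p" by (simp add: algebra_simps)
  ultimately have "x + 1 \<le> (P+1)*(n+1)^p" using x by linarith
  then have "(x+1)^q \<le> ((P+1)*(n+1)^p)^q" by (rule power_mono) simp
  also have "\<dots> = (P+1)^q*(n+1)^(p*q)" by (simp only: power_mult_distrib power_mult)
  finally show ?thesis by (simp add: mult.assoc)
qed

lemma arith5: "((m::nat)+1)^d \<le> 2^d * (m^d + 1)"
proof (cases "m = 0")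
  case True
  have "1 \<le> (2::nat)^d" by simp
  then have "1 * 1 \<le> (2::nat)^d * (m^d+1)" by (intro mult_le_mono) auto
  then show ?thesis using True by simp
next
  case False
  then have "m + 1 \<le> 2*m" by simp
  then have "(m+1)^d \<le> (2*m)^d" by (rule power_mono) simp
  also have "\<dots> = 2^d * m^d" by (simp add: power_mult_distrib)
  also have "\<dots> \<le> 2^d * (m^d + 1)" by simp
  finally show ?thesis .
qed

lemma arith6: "d \<le> D \<Longrightarrow> (C::nat)*(m+1)^d \<le> C*2^D*(m^D+1)"
proof -
  assume "d \<le> D"
  then have "(m+1)^d \<le> (m+1)^D" by (intro power_increasing) auto
  also have "\<dots> \<le> 2^D * (m^D + 1)" by (rule arith5)
  finally have "C*(m+1)^d \<le> C*(2^D*(m^D+1))" by (rule mult_left_mono) simp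
  then show ?thesis by (metis mult.assoc)
qed

lemma arith7: "(C1::nat)*(m+1)^d1 + C2*(m+1)^d2 \<le> (C1+C2)*(m+1)^(max d1 d2)"
proof -
  have "C1*(m+1)^d1 \<le> C1*(m+1)^(max d1 d2)" by (intro mult_left_mono power_increasing) auto
  moreover have "C2*(m+1)^d2 \<le> C2*(m+1)^(max d1 d2)" by (intro mult_left_mono power_increasing) auto
  ultimately show ?thesis by (simp add: distrib_right add_mono)
qed

lemma loop_bound:
  assumes body: "\<And>\<Sigma>a \<Sigma>b. finite (dom \<Sigma>a) \<Longrightarrow> exec \<Sigma>a s \<Sigma>b \<Longrightarrow>
        sz_store \<Sigma>b \<le> sz_store \<Sigma>a + Cb * (mI (\<Gamma>(x \<mapsto> IInt)) \<Sigma>a + 1)^db"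
    and frm: "\<And>\<Sigma>a \<Sigma>b y. exec \<Sigma>a s \<Sigma>b \<Longrightarrow> \<Gamma> y = Some IInt \<Longrightarrow> \<Sigma>b y = \<Sigma>a y"
    and xn: "x \<notin> dom \<Gamma>"
  shows "exec_loop x s i j \<Sigma> \<Sigma>' \<Longrightarrow> finite (dom \<Sigma>) \<Longrightarrow> 0 \<le> j \<Longrightarrow> i \<le> int K \<Longrightarrow> mI \<Gamma> \<Sigma> \<le> K \<Longrightarrow>
     sz_store \<Sigma>' \<le> sz_store \<Sigma> + nat (i - j) * (K + Cb*(K+1)^db)"
proof (induction "nat (i - j)" arbitrary: j \<Sigma> rule: less_induct)
  case less
  from less.prems(1) consider (dn) "i \<le> j" "\<Sigma>' = \<Sigma>"
    | (st) \<Sigma>1 where "j < i" "exec (\<Sigma>(x \<mapsto> VInt j)) s \<Sigma>1" "exec_loop x s i (j + 1) \<Sigma>1 \<Sigma>'"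
    by (cases rule: xLoopE) auto
  then show ?case
  proof cases
    case dn
    then show ?thesis by simp
  next
    case (st \<Sigma>1)
    note 2 = st
    let ?S = "\<Sigma>(x \<mapsto> VInt j)"
    have f1: "finite (dom ?S)" using less.prems(2) by simp
    have szj: "size_int j \<le> K"
    proof -
      have "size_int j = size_int (int (nat j))" using less.prems(3) by simp
      also have "\<dots> \<le> nat j" by (rule size_int_nat)
      also have "\<dots> \<le> K" using 2(1) less.prems(4) by linarith
      finally show ?thesis .
    qed
    have f2: "mI (\<Gamma>(x \<mapsto> IInt)) ?S \<le> K"
      unfolding mI_def
    proof (rule sz_store_le)
      show "finite (dom (?S |` domI (\<Gamma>(x \<mapsto> IInt))))" using f1 by simp
    next
      fix y w assume yw: "(?S |` domI (\<Gamma>(x \<mapsto> IInt))) y = Some w"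
      show "sz_val w \<le> K"
      proof (cases "y = x")
        case True then show ?thesis using yw szj by (auto simp: restrict_map_def split: if_splits)
      next
        case False
        then have "\<Gamma> y = Some IInt" "\<Sigma> y = Some w" using yw
          by (auto simp: restrict_map_def domI_def split: if_splits)
        then have "sz_val w \<le> mI \<Gamma> \<Sigma>" using mI_ge less.prems(2) by blast
        then show ?thesis using less.prems(5) by simp
      qed
    qed
    have f3: "sz_store ?S \<le> sz_store \<Sigma> + K"
      using sz_store_upd[OF less.prems(2), of x "VInt j"] szj by simp
    have "(mI (\<Gamma>(x \<mapsto> IInt)) ?S + 1)^db \<le> (K+1)^db" using f2 by (intro power_mono) auto
    then have m: "Cb*(mI (\<Gamma>(x \<mapsto> IInt)) ?S + 1)^db \<le> Cb*(K+1)^db" by (rule mult_left_mono) simp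
    have "sz_store \<Sigma>1 \<le> sz_store ?S + Cb*(mI (\<Gamma>(x \<mapsto> IInt)) ?S + 1)^db" by (rule body[OF f1 2(2)])
    then have s1: "sz_store \<Sigma>1 \<le> sz_store \<Sigma> + (K + Cb*(K+1)^db)"
      using f3 m by linarith
    have f4: "finite (dom \<Sigma>1)" using exec_finite(1)[OF 2(2)] f1 by simp
    have f5: "mI \<Gamma> \<Sigma>1 = mI \<Gamma> \<Sigma>"
    proof -
      have "\<Sigma>1 |` domI \<Gamma> = \<Sigma> |` domI \<Gamma>"
      proof
        fix y show "(\<Sigma>1 |` domI \<Gamma>) y = (\<Sigma> |` domI \<Gamma>) y"
        proof (cases "y \<in> domI \<Gamma>")
          case True
          then have "\<Gamma> y = Some IInt" "y \<noteq> x" using xn by (auto simp: domI_def)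
          then show ?thesis using frm[OF 2(2)] True by simp
        qed simp
      qed
      then show ?thesis by (simp add: mI_def)
    qed
    have lt: "nat (i - (j+1)) < nat (i - j)" using 2(1) by simp
    have ih: "sz_store \<Sigma>' \<le> sz_store \<Sigma>1 + nat (i - (j+1)) * (K + Cb*(K+1)^db)"
      using less.hyps[OF lt 2(3) f4] less.prems f5 by simp
    have "nat (i - j) = nat (i - (j+1)) + 1" using 2(1) by simp
    then show ?thesis using ih s1 by (simp add: algebra_simps)
  qed
qed

definition BT :: "stmt \<Rightarrow> nat \<Rightarrow> nat \<Rightarrow> bool" where
  "BT s C d \<longleftrightarrow> (\<forall>\<Gamma> \<Gamma>' \<Sigma> \<Sigma>'. finite (dom \<Sigma>) \<longrightarrow> stype \<Gamma> True s \<Gamma>' \<longrightarrow> exec \<Sigma> s \<Sigma>' \<longrightarrow>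
      sz_store \<Sigma>' \<le> sz_store \<Sigma> + C * (mI \<Gamma> \<Sigma> + 1) ^ d)"
definition BF :: "stmt \<Rightarrow> nat \<Rightarrow> nat \<Rightarrow> bool" where
  "BF s C d \<longleftrightarrow> (\<forall>\<Gamma> \<Gamma>' \<Sigma> \<Sigma>'. finite (dom \<Sigma>) \<longrightarrow> stype \<Gamma> False s \<Gamma>' \<longrightarrow> exec \<Sigma> s \<Sigma>' \<longrightarrow>
      sz_store \<Sigma>' \<le> C * (sz_store \<Sigma> + 1) ^ d)"
definition BTs :: "stmt list \<Rightarrow> nat \<Rightarrow> nat \<Rightarrow> bool" where
  "BTs ss C d \<longleftrightarrow> (\<forall>\<Gamma> \<Gamma>' \<Sigma> \<Sigma>'. finite (dom \<Sigma>) \<longrightarrow> stype_seq \<Gamma> True ss \<Gamma>' \<longrightarrow> exec_seq \<Sigma> ss \<Sigma>' \<longrightarrow>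
      sz_store \<Sigma>' \<le> sz_store \<Sigma> + C * (mI \<Gamma> \<Sigma> + 1) ^ d)"
definition BFs :: "stmt list \<Rightarrow> nat \<Rightarrow> nat \<Rightarrow> bool" where
  "BFs ss C d \<longleftrightarrow> (\<forall>\<Gamma> \<Gamma>' \<Sigma> \<Sigma>'. finite (dom \<Sigma>) \<longrightarrow> stype_seq \<Gamma> False ss \<Gamma>' \<longrightarrow> exec_seq \<Sigma> ss \<Sigma>' \<longrightarrow>
      sz_store \<Sigma>' \<le> C * (sz_store \<Sigma> + 1) ^ d)"

lemma for_bound:
  assumes bt: "BT s C0 d0" and st: "stype \<Gamma> l (For x e s) \<Gamma>'" and ex: "exec \<Sigma> (For x e s) \<Sigma>'"
    and fin: "finite (dom \<Sigma>)"
  shows "sz_store \<Sigma>' \<le> sz_store \<Sigma> + (1 + C0) * (mI \<Gamma> \<Sigma> + esz e + 1) ^ (d0 + 2)"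
proof -
  obtain \<Gamma>0 where et: "etype \<Gamma> l (App Size [e]) IInt" and xn: "x \<notin> dom \<Gamma>"
    and sb: "stype (\<Gamma>(x \<mapsto> IInt)) True s \<Gamma>0"
    using sForE[OF st] by blast
  obtain i where ev: "eval \<Sigma> (App Size [e]) (VInt i)" and lp: "exec_loop x s i 0 \<Sigma> \<Sigma>'"
    using xForE[OF ex] by blast
  obtain vs where vs: "list_all2 (eval \<Sigma>) [e] vs" "apply_op Size vs = Some (VInt i)"
    using evAppE[OF ev] by blast
  then obtain w where w: "vs = [w]" "eval \<Sigma> e w" by (auto simp: list_all2_Cons1)
  then obtain a where a: "w = VInt a" "i = int (size_int a)" using vs(2)
    by (cases w) (auto simp: apply_op_def)
  obtain ts where ts: "list_all2 (etype \<Gamma> l) [e] ts" "op_type Size ts = Some IInt"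
    using etAppE[OF et] by blast
  then have "ts = [IInt]" by (auto simp: op_type_def split: if_splits)
  then have ete: "etype \<Gamma> l e IInt" using ts(1) by simp
  let ?K = "mI \<Gamma> \<Sigma> + esz e"
  have "sz_val w \<le> mI \<Gamma> \<Sigma> + esz e"
    using eval_bound[OF w(2)] etype_IInt_vars[OF ete] mI_ge[OF fin] by blast
  then have iK: "i \<le> int ?K" using a by simp
  have body: "sz_store \<Sigma>b \<le> sz_store \<Sigma>a + C0 * (mI (\<Gamma>(x \<mapsto> IInt)) \<Sigma>a + 1)^d0"
    if "finite (dom \<Sigma>a)" "exec \<Sigma>a s \<Sigma>b" for \<Sigma>a \<Sigma>b
    using bt that sb unfolding BT_def by blast
  have frm: "\<Sigma>b y = \<Sigma>a y" if "exec \<Sigma>a s \<Sigma>b" "\<Gamma> y = Some IInt" for \<Sigma>a \<Sigma>b y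
  proof -
    have "(\<Gamma>(x \<mapsto> IInt)) y = Some IInt" using that(2) by simp
    then show ?thesis using frame(1)[OF that(1)] sb by blast
  qed
  have "sz_store \<Sigma>' \<le> sz_store \<Sigma> + nat (i - 0) * (?K + C0*(?K+1)^d0)"
    apply (rule loop_bound[where s=s and Cb=C0 and \<Gamma>=\<Gamma> and x=x and db=d0 and i=i and j=0
          and \<Sigma>=\<Sigma> and \<Sigma>'=\<Sigma>' and K="?K"])
    apply (erule (1) body)
    apply (erule (1) frm)
    using xn lp fin iK by auto
  also have "nat (i - 0) * (?K + C0*(?K+1)^d0) \<le> ?K * (?K + C0*(?K+1)^d0)"
    using iK by (intro mult_right_mono) auto
  also have "\<dots> \<le> (1 + C0) * (?K+1)^(d0+2)" by (rule arith1)
  finally show ?thesis by (simp add: add.assoc)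
qed


lemma decl_bound: "finite (dom \<Sigma>) \<Longrightarrow> exec \<Sigma> (Decl t x) \<Sigma>' \<Longrightarrow> sz_store \<Sigma>' \<le> sz_store \<Sigma> + 1"
  apply (erule xDeclE)
  using sz_store_upd[of \<Sigma> x "VInt 0"] sz_store_upd[of \<Sigma> x "VBool False"] by auto

lemma assign_bound: "finite (dom \<Sigma>) \<Longrightarrow> exec \<Sigma> (Assign x e) \<Sigma>' \<Longrightarrow> sz_store \<Sigma>' \<le> sz_store \<Sigma> + esz e"
proof -
  assume fin: "finite (dom \<Sigma>)" and ex: "exec \<Sigma> (Assign x e) \<Sigma>'"
  obtain v where v: "\<Sigma>' = \<Sigma>(x \<mapsto> v)" "eval \<Sigma> e v" using xAssignE[OF ex] by blast
  have "sz_val v \<le> sz_store \<Sigma> + esz e" using eval_bound[OF v(2), of "sz_store \<Sigma>"] sz_store_ge[OF fin] by blast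
  then show ?thesis using sz_store_upd[OF fin, of x v] v(1) by simp
qed

lemma seq_bounds:
  assumes "\<forall>s\<in>set ss. (\<exists>C d. BT s C d) \<and> (\<exists>C d. BF s C d)"
  shows "(\<exists>C d. BTs ss C d) \<and> (\<exists>C d. BFs ss C d)"
using assms
proof (induction ss)
  case Nil
  have "BTs [] 0 0" unfolding BTs_def by (auto elim: xNilE)
  moreover have "BFs [] 1 1" unfolding BFs_def by (auto elim: xNilE)
  ultimately show ?case by blast
next
  case (Cons s ss)
  obtain C1 d1 where b1: "BT s C1 d1" using Cons.prems by auto
  obtain E1 e1 where f1: "BF s E1 e1" using Cons.prems by auto
  obtain C2 d2 where b2: "BTs ss C2 d2" using Cons by auto
  obtain E2 e2 where f2: "BFs ss E2 e2" using Cons by auto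
  have "BTs (s#ss) (C1+C2) (max d1 d2)"
    unfolding BTs_def
  proof (intro allI impI)
    fix \<Gamma> \<Gamma>' \<Sigma> \<Sigma>' assume a: "finite (dom \<Sigma>)" "stype_seq \<Gamma> True (s#ss) \<Gamma>'" "exec_seq \<Sigma> (s#ss) \<Sigma>'"
    obtain \<Gamma>1 where t1: "stype \<Gamma> True s \<Gamma>1" "stype_seq \<Gamma>1 True ss \<Gamma>'" using sConsE[OF a(2)] by blast
    obtain \<Sigma>1 where x1: "exec \<Sigma> s \<Sigma>1" "exec_seq \<Sigma>1 ss \<Sigma>'" using xConsE[OF a(3)] by blast
    have fin1: "finite (dom \<Sigma>1)" using exec_finite(1)[OF x1(1)] a(1) by simp
    have s1: "sz_store \<Sigma>1 \<le> sz_store \<Sigma> + C1*(mI \<Gamma> \<Sigma>+1)^d1"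
      using b1 a(1) t1(1) x1(1) unfolding BT_def by blast
    have dI: "domI \<Gamma>1 = domI \<Gamma>" using stype_domI(1)[OF t1(1)] by simp
    have "\<Sigma>1 |` domI \<Gamma>1 = \<Sigma> |` domI \<Gamma>"
    proof
      fix y show "(\<Sigma>1 |` domI \<Gamma>1) y = (\<Sigma> |` domI \<Gamma>) y"
        using frame(1)[OF x1(1)] t1(1) dI by (cases "y \<in> domI \<Gamma>") (auto simp: domI_def)
    qed
    then have mm: "mI \<Gamma>1 \<Sigma>1 = mI \<Gamma> \<Sigma>" by (simp add: mI_def)
    have s2: "sz_store \<Sigma>' \<le> sz_store \<Sigma>1 + C2*(mI \<Gamma> \<Sigma>+1)^d2"
      using b2 fin1 t1(2) x1(2) mm unfolding BTs_def by metis
    show "sz_store \<Sigma>' \<le> sz_store \<Sigma> + (C1+C2)*(mI \<Gamma> \<Sigma>+1)^(max d1 d2)"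
      using s1 s2 arith7[of C1 "mI \<Gamma> \<Sigma>" d1 C2 d2] by linarith
  qed
  moreover have "BFs (s#ss) (E2*(E1+1)^e2) (e1*e2)"
    unfolding BFs_def
  proof (intro allI impI)
    fix \<Gamma> \<Gamma>' \<Sigma> \<Sigma>' assume a: "finite (dom \<Sigma>)" "stype_seq \<Gamma> False (s#ss) \<Gamma>'" "exec_seq \<Sigma> (s#ss) \<Sigma>'"
    obtain \<Gamma>1 where t1: "stype \<Gamma> False s \<Gamma>1" "stype_seq \<Gamma>1 False ss \<Gamma>'" using sConsE[OF a(2)] by blast
    obtain \<Sigma>1 where x1: "exec \<Sigma> s \<Sigma>1" "exec_seq \<Sigma>1 ss \<Sigma>'" using xConsE[OF a(3)] by blast
    have fin1: "finite (dom \<Sigma>1)" using exec_finite(1)[OF x1(1)] a(1) by simp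
    have s1: "sz_store \<Sigma>1 \<le> E1*(sz_store \<Sigma>+1)^e1"
      using f1 a(1) t1(1) x1(1) unfolding BF_def by blast
    have s2: "sz_store \<Sigma>' \<le> E2*(sz_store \<Sigma>1+1)^e2"
      using f2 fin1 t1(2) x1(2) unfolding BFs_def by blast
    show "sz_store \<Sigma>' \<le> E2*(E1+1)^e2*(sz_store \<Sigma>+1)^(e1*e2)"
      using s2 arith4[OF s1, where Q=E2 and q=e2] by linarith
  qed
  ultimately show ?case by blast
qed

lemma main: "(\<exists>C d. BT s C d) \<and> (\<exists>C d. BF s C d)"
proof (induction s)
  case (Decl t x)
  have "BT (Decl t x) 1 0" unfolding BT_def using decl_bound by auto
  moreover have "BF (Decl t x) 1 1" unfolding BF_def using decl_bound by fastforce
  ultimately show ?case by blast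
next
  case (Assign x e)
  have "BT (Assign x e) (esz e) 0" unfolding BT_def using assign_bound by auto
  moreover have "BF (Assign x e) (esz e + 1) 1" unfolding BF_def
  proof (intro allI impI)
    fix \<Gamma> \<Gamma>' \<Sigma> \<Sigma>' assume a: "finite (dom \<Sigma>)" "stype \<Gamma> False (Assign x e) \<Gamma>'" "exec \<Sigma> (Assign x e) \<Sigma>'"
    have "sz_store \<Sigma>' \<le> sz_store \<Sigma> + esz e" using assign_bound a by blast
    moreover have "(esz e + 1) * (sz_store \<Sigma> + 1) = esz e * sz_store \<Sigma> + esz e + sz_store \<Sigma> + 1"
      by (simp add: algebra_simps)
    ultimately show "sz_store \<Sigma>' \<le> (esz e + 1) * (sz_store \<Sigma> + 1) ^ 1" by simp
  qed
  ultimately show ?case by blast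
next
  case (Block ss)
  then obtain C d E f where b: "BTs ss C d" "BFs ss E f" using seq_bounds by blast
  have "BT (Block ss) C d" using b(1) unfolding BT_def BTs_def
    by (auto elim!: sBlockE xBlockE)
  moreover have "BF (Block ss) E f" using b(2) unfolding BF_def BFs_def
    by (auto elim!: sBlockE xBlockE)
  ultimately show ?case by blast
next
  case (If b s1 s2)
  obtain C1 d1 E1 f1 where b1: "BT s1 C1 d1" "BF s1 E1 f1" using If by blast
  obtain C2 d2 E2 f2 where b2: "BT s2 C2 d2" "BF s2 E2 f2" using If by blast
  have "BT (If b s1 s2) (C1+C2) (max d1 d2)" unfolding BT_def
  proof (intro allI impI)
    fix \<Gamma> \<Gamma>' \<Sigma> \<Sigma>' assume a: "finite (dom \<Sigma>)" "stype \<Gamma> True (If b s1 s2) \<Gamma>'" "exec \<Sigma> (If b s1 s2) \<Sigma>'"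
    obtain \<Gamma>1 \<Gamma>2 where t: "stype \<Gamma> True s1 \<Gamma>1" "stype \<Gamma> True s2 \<Gamma>2" using sIfE[OF a(2)] by blast
    have "exec \<Sigma> s1 \<Sigma>' \<or> exec \<Sigma> s2 \<Sigma>'" using xIfE[OF a(3)] by blast
    then show "sz_store \<Sigma>' \<le> sz_store \<Sigma> + (C1+C2)*(mI \<Gamma> \<Sigma>+1)^(max d1 d2)"
    proof
      assume "exec \<Sigma> s1 \<Sigma>'"
      then have "sz_store \<Sigma>' \<le> sz_store \<Sigma> + C1*(mI \<Gamma> \<Sigma>+1)^d1" using b1(1) a(1) t(1) unfolding BT_def by blast
      then show ?thesis using arith3[of C1 "mI \<Gamma> \<Sigma>" d1 C2 d2] by linarith
    next
      assume "exec \<Sigma> s2 \<Sigma>'"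
      then have "sz_store \<Sigma>' \<le> sz_store \<Sigma> + C2*(mI \<Gamma> \<Sigma>+1)^d2" using b2(1) a(1) t(2) unfolding BT_def by blast
      then show ?thesis using arith3'[of C2 "mI \<Gamma> \<Sigma>" d2 C1 d1] by linarith
    qed
  qed
  moreover have "BF (If b s1 s2) (E1+E2) (max f1 f2)" unfolding BF_def
  proof (intro allI impI)
    fix \<Gamma> \<Gamma>' \<Sigma> \<Sigma>' assume a: "finite (dom \<Sigma>)" "stype \<Gamma> False (If b s1 s2) \<Gamma>'" "exec \<Sigma> (If b s1 s2) \<Sigma>'"
    obtain \<Gamma>1 \<Gamma>2 where t: "stype \<Gamma> False s1 \<Gamma>1" "stype \<Gamma> False s2 \<Gamma>2" using sIfE[OF a(2)] by blast
    have "exec \<Sigma> s1 \<Sigma>' \<or> exec \<Sigma> s2 \<Sigma>'" using xIfE[OF a(3)] by blast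
    then show "sz_store \<Sigma>' \<le> (E1+E2)*(sz_store \<Sigma>+1)^(max f1 f2)"
    proof
      assume "exec \<Sigma> s1 \<Sigma>'"
      then have "sz_store \<Sigma>' \<le> E1*(sz_store \<Sigma>+1)^f1" using b1(2) a(1) t(1) unfolding BF_def by blast
      then show ?thesis using arith3[of E1 "sz_store \<Sigma>" f1 E2 f2] by linarith
    next
      assume "exec \<Sigma> s2 \<Sigma>'"
      then have "sz_store \<Sigma>' \<le> E2*(sz_store \<Sigma>+1)^f2" using b2(2) a(1) t(2) unfolding BF_def by blast
      then show ?thesis using arith3'[of E2 "sz_store \<Sigma>" f2 E1 f1] by linarith
    qed
  qed
  ultimately show ?case by blast
next
  case (For x e s)
  obtain C0 d0 where b0: "BT s C0 d0" using For by blast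
  let ?D = "d0 + 2"
  have "BT (For x e s) ((1+C0)*(esz e+1)^?D) ?D" unfolding BT_def
  proof (intro allI impI)
    fix \<Gamma> \<Gamma>' \<Sigma> \<Sigma>' assume a: "finite (dom \<Sigma>)" "stype \<Gamma> True (For x e s) \<Gamma>'" "exec \<Sigma> (For x e s) \<Sigma>'"
    have "sz_store \<Sigma>' \<le> sz_store \<Sigma> + (1 + C0) * (mI \<Gamma> \<Sigma> + esz e + 1) ^ ?D"
      by (rule for_bound[OF b0 a(2) a(3) a(1)])
    moreover have "(1 + C0) * (mI \<Gamma> \<Sigma> + esz e + 1) ^ ?D \<le> (1 + C0) * ((esz e+1)^?D * (mI \<Gamma> \<Sigma> + 1)^?D)"
      by (intro mult_left_mono arith2) simp
    moreover have "(1 + C0) * ((esz e+1)^?D * (mI \<Gamma> \<Sigma> + 1)^?D) = (1+C0)*(esz e+1)^?D * (mI \<Gamma> \<Sigma> + 1)^?D"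
      by (rule mult.assoc[symmetric])
    ultimately show "sz_store \<Sigma>' \<le> sz_store \<Sigma> + (1+C0)*(esz e+1)^?D * (mI \<Gamma> \<Sigma> + 1)^?D"
      by linarith
  qed
  moreover have "BF (For x e s) (1 + (1+C0)*(esz e+1)^?D) ?D" unfolding BF_def
  proof (intro allI impI)
    fix \<Gamma> \<Gamma>' \<Sigma> \<Sigma>' assume a: "finite (dom \<Sigma>)" "stype \<Gamma> False (For x e s) \<Gamma>'" "exec \<Sigma> (For x e s) \<Sigma>'"
    let ?n = "sz_store \<Sigma>"
    have "sz_store \<Sigma>' \<le> ?n + (1 + C0) * (mI \<Gamma> \<Sigma> + esz e + 1) ^ ?D"
      by (rule for_bound[OF b0 a(2) a(3) a(1)])
    have X1: "(mI \<Gamma> \<Sigma> + esz e + 1) ^ ?D \<le> (?n + esz e + 1) ^ ?D"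
      using mI_le_sz[OF a(1), of \<Gamma>] by (intro power_mono) auto
    have X2: "(?n + esz e + 1) ^ ?D \<le> (esz e+1)^?D * (?n+1)^?D" by (rule arith2)
    have "?n + 1 \<le> (?n+1)^?D" by (rule self_le_power) auto
    have X: "(1 + C0) * (mI \<Gamma> \<Sigma> + esz e + 1) ^ ?D \<le> (1 + C0) * ((esz e+1)^?D * (?n+1)^?D)"
      using order.trans[OF X1 X2] by (rule mult_left_mono) simp
    have Y: "(1 + (1+C0)*(esz e+1)^?D) * (?n+1)^?D = (?n+1)^?D + (1 + C0) * ((esz e+1)^?D * (?n+1)^?D)"
      by (simp add: algebra_simps)
    show "sz_store \<Sigma>' \<le> (1 + (1+C0)*(esz e+1)^?D) * (?n+1)^?D"
      using X Y \<open>sz_store \<Sigma>' \<le> ?n + (1 + C0) * (mI \<Gamma> \<Sigma> + esz e + 1) ^ ?D\<close> \<open>?n + 1 \<le> (?n+1)^?D\<close>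
      by linarith
  qed
  ultimately show ?case by blast
qed

theorem lemma7:
  fixes s :: stmt and l :: bool
  shows "\<exists>C d k :: nat. \<forall>\<Gamma> \<Sigma> \<Gamma>' \<Sigma>'.
           finite (dom \<Sigma>) \<and> consistent \<Gamma> \<Sigma> \<and> stype \<Gamma> l s \<Gamma>' \<and> exec \<Sigma> s \<Sigma>' \<longrightarrow>
             (l \<longrightarrow> sz_store \<Sigma>' - sz_store \<Sigma> \<le> C * (sz_store (\<Sigma> |` domI \<Gamma>) ^ d + 1)) \<and>
             (\<not> l \<longrightarrow> sz_store \<Sigma>' - sz_store \<Sigma> \<le> C * (sz_store \<Sigma> ^ (d ^ k) + 1))"
proof -
  obtain CT dT CF dF where bt: "BT s CT dT" and bf: "BF s CF dF" using main by blast
  define D where "D = max dT dF"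
  have dT: "dT \<le> D" and dF: "dF \<le> D" by (auto simp: D_def)
  show ?thesis
  proof (rule exI[of _ "(CT+CF)*2^D"], rule exI[of _ D], rule exI[of _ "1::nat"], intro allI impI)
    fix \<Gamma> \<Sigma> \<Gamma>' \<Sigma>'
    assume a: "finite (dom \<Sigma>) \<and> consistent \<Gamma> \<Sigma> \<and> stype \<Gamma> l s \<Gamma>' \<and> exec \<Sigma> s \<Sigma>'"
    have A: "sz_store \<Sigma>' - sz_store \<Sigma> \<le> (CT+CF)*2^D*(sz_store (\<Sigma> |` domI \<Gamma>)^D+1)" if l: l
    proof -
      let ?m = "mI \<Gamma> \<Sigma>"
      have st: "stype \<Gamma> True s \<Gamma>'" using a l by simp
      have "sz_store \<Sigma>' \<le> sz_store \<Sigma> + CT*(?m+1)^dT"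
        using bt st a unfolding BT_def by blast
      moreover have "CT*(?m+1)^dT \<le> CT*2^D*(?m^D+1)" by (rule arith6[OF dT])
      moreover have "CT*2^D*(?m^D+1) \<le> (CT+CF)*2^D*(?m^D+1)" by (intro mult_right_mono) auto
      ultimately show ?thesis unfolding mI_def by linarith
    qed
    have B: "sz_store \<Sigma>' - sz_store \<Sigma> \<le> (CT+CF)*2^D*(sz_store \<Sigma>^(D^1)+1)" if l: "\<not> l"
    proof -
      let ?n = "sz_store \<Sigma>"
      have st: "stype \<Gamma> False s \<Gamma>'" using a l by simp
      have "sz_store \<Sigma>' \<le> CF*(?n+1)^dF"
        using bf st a unfolding BF_def by blast
      moreover have "CF*(?n+1)^dF \<le> CF*2^D*(?n^D+1)" by (rule arith6[OF dF])
      moreover have "CF*2^D*(?n^D+1) \<le> (CT+CF)*2^D*(?n^D+1)" by (intro mult_right_mono) auto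
      ultimately show ?thesis unfolding power_one_right by linarith
    qed
    show "(l \<longrightarrow> sz_store \<Sigma>' - sz_store \<Sigma> \<le> (CT+CF)*2^D*(sz_store (\<Sigma> |` domI \<Gamma>)^D+1)) \<and>
          (\<not> l \<longrightarrow> sz_store \<Sigma>' - sz_store \<Sigma> \<le> (CT+CF)*2^D*(sz_store \<Sigma>^(D^1)+1))"
      using A B by blast
  qed
qed

end
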